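(* Let $ABC$ be a triangle and let $P$ be a point. Let $H_A, H_B, H_C$ be the orthocenters of the triangles $BPC$, $CPA$, $PAB$ respectively, and let $\triangle_A, \triangle_B, \triangle_C$ denote the triangles $AH_BH_C$, $BH_CH_A$, $CH_AH_B$ respectively. Let $\mathcal{H}_P$ be the rectangular hyperbola circumscribed about $ABC$ and passing through $P$. Then the circumcircles of $\triangle_A, \triangle_B, \triangle_C$ pass through a common point, and this point lies on $\mathcal{H}_P$.
   Context: A rectangular hyperbola is a hyperbola whose asymptotes are perpendicular. All triangles involved are assumed nondegenerate. *)

theory Defs
  imports "HOL-Analysis.Analysis"
begin

type_synonym point = "real \<times> real"

definition triangle :: "point \<Rightarrow> point \<Rightarrow> point \<Rightarrow> bool" where
  "triangle A B C \<longleftrightarrow> \<not> collinear {A, B, C}"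

definition is_orthocenter :: "point \<Rightarrow> point \<Rightarrow> point \<Rightarrow> point \<Rightarrow> bool" where
  "is_orthocenter H A B C \<longleftrightarrow> (H - A) \<bullet> (B - C) = 0 \<and> (H - B) \<bullet> (C - A) = 0 \<and> (H - C) \<bullet> (A - B) = 0"

definition on_circumcircle :: "point \<Rightarrow> point \<Rightarrow> point \<Rightarrow> point \<Rightarrow> bool" where
  "on_circumcircle Q X Y Z \<longleftrightarrow> (\<exists>M. dist M X = dist M Y \<and> dist M X = dist M Z \<and> dist M Q = dist M X)"

definition on_conic :: "real \<Rightarrow> real \<Rightarrow> real \<Rightarrow> real \<Rightarrow> real \<Rightarrow> real \<Rightarrow> point \<Rightarrow> bool" where
  "on_conic a b c d e f X \<longleftrightarrow>
     a * (fst X)^2 + b * fst X * snd X + c * (snd X)^2 + d * fst X + e * snd X + f = 0"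

text \<open>The conic is a nondegenerate hyperbola with perpendicular asymptotes:
  nonzero quadratic part, trace a + c = 0 of the quadratic form (perpendicular asymptotes;
  then b^2 - 4ac = b^2 + 4a^2 > 0, so it is of hyperbolic type), and nonzero determinant of
  the 3x3 conic matrix (nondegenerate).\<close>
definition rect_hyperbola :: "real \<Rightarrow> real \<Rightarrow> real \<Rightarrow> real \<Rightarrow> real \<Rightarrow> real \<Rightarrow> bool" where
  "rect_hyperbola a b c d e f \<longleftrightarrow>
     (a, b, c) \<noteq> (0, 0, 0) \<and> a + c = 0 \<and>
     a * (c * f - e^2 / 4) - (b / 2) * (b / 2 * f - e * d / 4) + (d / 2) * (b * e / 4 - c * d / 2) \<noteq> 0"

end

theory Submission
  imports Defs
begin

lemma tri_cross:
  assumes "triangle (x1,y1) (x2,y2) (x3,y3)"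
  shows "(x2-x1)*(y3-y1) - (y2-y1)*(x3-x1) \<noteq> 0"
proof
  assume h: "(x2-x1)*(y3-y1) - (y2-y1)*(x3-x1) = 0"
  have "collinear {(x1,y1), (x2,y2), (x3,y3)}"
  proof (cases "(x1,y1) = (x3,y3)")
    case True then show ?thesis unfolding collinear_3_expand by blast
  next
    case False
    show ?thesis unfolding collinear_3_expand
    proof (rule disjI2)
      show "\<exists>u. (x2,y2) = u *\<^sub>R (x1,y1) + (1 - u) *\<^sub>R (x3,y3)"
      proof (cases "x1 = x3")
        case True
        with False have ne: "y1 \<noteq> y3" by auto
        define u where "u = (y2-y3)/(y1-y3)"
        have "x2 = x3" using h True ne
          by (metis (no_types, opaque_lifting) diff_self eq_iff_diff_eq_0 mult_eq_0_iff mult_zero_left right_minus_eq)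
        moreover have "y2 = u*y1 + (1-u)*y3"
        proof -
          have "u*(y1-y3) = y2-y3" using ne unfolding u_def by simp
          then show ?thesis by (simp add: algebra_simps)
        qed
        ultimately show ?thesis using True by (intro exI[of _ u]) (simp add: algebra_simps)
      next
        case ne: False
        define u where "u = (x2-x3)/(x1-x3)"
        have "u*(x1-x3) = x2-x3" using ne unfolding u_def by simp
        then have x: "x2 = u*x1 + (1-u)*x3" by (simp add: algebra_simps)
        have "y2 - y3 = u*(y1-y3)" using ne h unfolding u_def
          by (simp add: field_simps)
        then have "y2 = u*y1 + (1-u)*y3" by (simp add: algebra_simps)
        with x show ?thesis by (intro exI[of _ u]) (simp add: algebra_simps)
      qed
    qed
  qed
  with assms show False unfolding triangle_def by simp
qed


definition oncirc :: "real \<Rightarrow> real \<Rightarrow> real \<Rightarrow> real \<Rightarrow> real \<Rightarrow> real \<Rightarrow> real \<Rightarrow> real \<Rightarrow> bool" where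
  "oncirc q1 q2 x1 y1 x2 y2 x3 y3 \<longleftrightarrow> (\<exists>m1 m2. (m1-x1)^2+(m2-y1)^2 = (m1-x2)^2+(m2-y2)^2 \<and>
     (m1-x1)^2+(m2-y1)^2 = (m1-x3)^2+(m2-y3)^2 \<and> (m1-q1)^2+(m2-q2)^2 = (m1-x1)^2+(m2-y1)^2)"

lemma oncirc_bridge:
  assumes "oncirc q1 q2 x1 y1 x2 y2 x3 y3"
  shows "on_circumcircle (q1,q2) (x1,y1) (x2,y2) (x3,y3)"
proof -
  obtain m1 m2 where h: "(m1-x1)^2+(m2-y1)^2 = (m1-x2)^2+(m2-y2)^2"
     "(m1-x1)^2+(m2-y1)^2 = (m1-x3)^2+(m2-y3)^2" "(m1-q1)^2+(m2-q2)^2 = (m1-x1)^2+(m2-y1)^2"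
    using assms unfolding oncirc_def by blast
  have d: "dist (m1,m2) (u,v) = sqrt ((m1-u)^2+(m2-v)^2)" for u v
    by (simp add: dist_Pair_Pair dist_real_def power2_abs)
  show ?thesis unfolding on_circumcircle_def
    by (rule exI[of _ "(m1,m2)"]) (simp add: d h(1)[symmetric] h(2)[symmetric] h(3))
qed

lemma solve2: "(D::real) \<noteq> 0 \<Longrightarrow> \<exists>m1 m2. D*m1 = N1 \<and> D*m2 = N2"
  by (rule exI[of _ "N1/D"], rule exI[of _ "N2/D"]) simp

lemma circumcenter_ex:
  fixes x1 y1 x2 y2 x3 y3 :: real
  assumes "(x2-x1)*(y3-y1) - (y2-y1)*(x3-x1) \<noteq> 0"
  shows "\<exists>m1 m2. (m1-x1)^2+(m2-y1)^2 = (m1-x2)^2+(m2-y2)^2 \<and> (m1-x1)^2+(m2-y1)^2 = (m1-x3)^2+(m2-y3)^2"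
proof -
  define u1 u2 w1 w2 where uw: "u1 = x2-x1" "u2 = y2-y1" "w1 = x3-x1" "w2=y3-y1"
  define r1 r2 where rr: "r1 = (x2^2+y2^2-x1^2-y1^2)/2" "r2 = (x3^2+y3^2-x1^2-y1^2)/2"
  obtain m1 m2 where m: "(u1*w2-u2*w1)*m1 = r1*w2 - u2*r2" "(u1*w2-u2*w1)*m2 = u1*r2 - r1*w1"
    using solve2[of "u1*w2-u2*w1"] assms unfolding uw by blast
  have "(m1-x1)^2+(m2-y1)^2 = (m1-x2)^2+(m2-y2)^2 \<and> (m1-x1)^2+(m2-y1)^2 = (m1-x3)^2+(m2-y3)^2"
    using m assms unfolding uw rr by algebra
  then show ?thesis by blast
qed

lemma orthocenter_ex:
  fixes x1 y1 x2 y2 x3 y3 :: real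
  assumes "(x2-x1)*(y3-y1) - (y2-y1)*(x3-x1) \<noteq> 0"
  shows "\<exists>h1 h2. (h1 - x1)*(x2-x3) + (h2-y1)*(y2-y3) = 0 \<and> (h1 - x2)*(x3-x1) + (h2-y2)*(y3-y1) = 0"
proof -
  define u1 u2 w1 w2 where uw: "u1 = x2-x3" "u2 = y2-y3" "w1 = x3-x1" "w2=y3-y1"
  define r1 r2 where rr: "r1 = x1*u1+y1*u2" "r2 = x2*w1+y2*w2"
  have nz: "u1*w2-u2*w1 \<noteq> 0" using assms unfolding uw by algebra
  obtain m1 m2 where m: "(u1*w2-u2*w1)*m1 = r1*w2 - u2*r2" "(u1*w2-u2*w1)*m2 = u1*r2 - r1*w1"
    using solve2[OF nz] by blast
  have "(m1 - x1)*(x2-x3) + (m2-y1)*(y2-y3) = 0 \<and> (m1 - x2)*(x3-x1) + (m2-y2)*(y3-y1) = 0"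
    using m nz unfolding uw rr by algebra
  then show ?thesis by blast
qed

lemma center_ex:
  fixes a b d e :: real
  assumes "4*a^2+b^2 \<noteq> 0"
  shows "\<exists>z1 z2. 2*a*z1 + b*z2 + d = 0 \<and> b*z1 - 2*a*z2 + e = 0"
proof -
  obtain z1 z2 where m: "(-4*a^2-b^2)*z1 = 2*a*d + b*e" "(-4*a^2-b^2)*z2 = b*d - 2*a*e"
    using solve2[of "-4*a^2-b^2"] assms by fastforce
  have "2*a*z1 + b*z2 + d = 0 \<and> b*z1 - 2*a*z2 + e = 0" using m assms by algebra
  then show ?thesis by blast
qed

lemma conic3_ex:
  fixes x1 y1 x2 y2 x3 y3 a b :: real
  assumes "(x2-x1)*(y3-y1) - (y2-y1)*(x3-x1) \<noteq> 0"
  shows "\<exists>d e f. a*x1^2 + b*x1*y1 - a*y1^2 + d*x1 + e*y1 + f = 0 \<and>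
    a*x2^2 + b*x2*y2 - a*y2^2 + d*x2 + e*y2 + f = 0 \<and>
    a*x3^2 + b*x3*y3 - a*y3^2 + d*x3 + e*y3 + f = 0"
proof -
  define u1 u2 w1 w2 where uw: "u1 = x2-x1" "u2 = y2-y1" "w1 = x3-x1" "w2=y3-y1"
  define r1 r2 where rr: "r1 = -((a*x2^2 + b*x2*y2 - a*y2^2) - (a*x1^2 + b*x1*y1 - a*y1^2))"
     "r2 = -((a*x3^2 + b*x3*y3 - a*y3^2) - (a*x1^2 + b*x1*y1 - a*y1^2))"
  obtain d e where m: "(u1*w2-u2*w1)*d = r1*w2 - u2*r2" "(u1*w2-u2*w1)*e = u1*r2 - r1*w1"
    using solve2[of "u1*w2-u2*w1"] assms unfolding uw by blast
  define f where "f = -(a*x1^2 + b*x1*y1 - a*y1^2 + d*x1 + e*y1)"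
  have "a*x1^2 + b*x1*y1 - a*y1^2 + d*x1 + e*y1 + f = 0 \<and>
    a*x2^2 + b*x2*y2 - a*y2^2 + d*x2 + e*y2 + f = 0 \<and>
    a*x3^2 + b*x3*y3 - a*y3^2 + d*x3 + e*y3 + f = 0"
    using m assms unfolding uw rr f_def by algebra
  then show ?thesis by blast
qed

lemma L1:
  fixes x1 y1 x2 y2 x3 y3 hx hy a b d e f :: real
  assumes "(hx - x1)*(x2-x3) + (hy-y1)*(y2-y3) = 0"
    "(hx - x2)*(x3-x1) + (hy-y2)*(y3-y1) = 0"
    "(x2-x1)*(y3-y1) - (y2-y1)*(x3-x1) \<noteq> 0"
    "a*x1^2 + b*x1*y1 - a*y1^2 + d*x1 + e*y1 + f = 0"
    "a*x2^2 + b*x2*y2 - a*y2^2 + d*x2 + e*y2 + f = 0"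
    "a*x3^2 + b*x3*y3 - a*y3^2 + d*x3 + e*y3 + f = 0"
  shows "a*hx^2 + b*hx*hy - a*hy^2 + d*hx + e*hy + f = 0"
  using assms by algebra
lemma L2:
  fixes x1 y1 x2 y2 x3 y3 hx hy a b d e f zx zy mx my :: real
  assumes "(hx - x1)*(x2-x3) + (hy-y1)*(y2-y3) = 0"
    "(hx - x2)*(x3-x1) + (hy-y2)*(y3-y1) = 0"
    "(x2-x1)*(y3-y1) - (y2-y1)*(x3-x1) \<noteq> 0"
    "a*x1^2 + b*x1*y1 - a*y1^2 + d*x1 + e*y1 + f = 0"
    "a*x2^2 + b*x2*y2 - a*y2^2 + d*x2 + e*y2 + f = 0"
    "a*x3^2 + b*x3*y3 - a*y3^2 + d*x3 + e*y3 + f = 0"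
    "2*a*zx + b*zy + d = 0" "b*zx - 2*a*zy + e = 0"
    "4*a^2+b^2 \<noteq> 0"
    "(mx-x1)^2+(my-y1)^2 = (mx-x2)^2+(my-y2)^2"
    "(mx-x1)^2+(my-y1)^2 = (mx-x3)^2+(my-y3)^2"
  shows "(mx-(2*zx-hx))^2+(my-(2*zy-hy))^2 = (mx-x1)^2+(my-y1)^2"
  using assms by algebra

lemma Lsym:
  fixes a b d e f zx zy hx hy :: real
  assumes "2*a*zx + b*zy + d = 0" "b*zx - 2*a*zy + e = 0"
    "a*hx^2 + b*hx*hy - a*hy^2 + d*hx + e*hy + f = 0"
  shows "a*(2*zx-hx)^2 + b*(2*zx-hx)*(2*zy-hy) - a*(2*zy-hy)^2 + d*(2*zx-hx) + e*(2*zy-hy) + f = 0"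
  using assms by algebra

lemma Lpar:
  fixes u1 u2 v1 v2 w1 w2 z1 z2 :: real
  assumes "u1*w1+u2*w2 = 0" "v1*w1+v2*w2 = 0" "z1*w2-z2*w1 \<noteq> 0"
  shows "u1* v2-u2* v1 = 0"
  using assms by algebra

lemma Lperp:
  fixes u1 u2 v1 v2 w1 w2 z1 z2 :: real
  assumes "u1* v2-u2* v1 = 0" "v1*w1+v2*w2 = 0" "z1* v2-z2* v1 \<noteq> 0"
  shows "u1*w1+u2*w2 = 0"
  using assms by algebra

lemma conc:
  fixes a1 a2 b1 b2 c1 c2 ha1 ha2 hb1 hb2 hc1 hc2 k1 k2 p1 p2 :: real
  assumes "(ha1-p1)*(b1-p1)+(ha2-p2)*(b2-p2) = (b1-p1)*(c1-p1)+(b2-p2)*(c2-p2)" "(ha1-p1)*(c1-p1)+(ha2-p2)*(c2-p2) = (b1-p1)*(c1-p1)+(b2-p2)*(c2-p2)"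
    "(hb1-p1)*(c1-p1)+(hb2-p2)*(c2-p2) = (c1-p1)*(a1-p1)+(c2-p2)*(a2-p2)" "(hb1-p1)*(a1-p1)+(hb2-p2)*(a2-p2) = (c1-p1)*(a1-p1)+(c2-p2)*(a2-p2)"
    "(hc1-p1)*(a1-p1)+(hc2-p2)*(a2-p2) = (a1-p1)*(b1-p1)+(a2-p2)*(b2-p2)" "(hc1-p1)*(b1-p1)+(hc2-p2)*(b2-p2) = (a1-p1)*(b1-p1)+(a2-p2)*(b2-p2)"
    "(b1-p1)*(c2-p2)-(b2-p2)*(c1-p1) \<noteq> 0"
    "(k1-p1)*(b2-p2)-(k2-p2)*(b1-p1) = (hb1-p1)*(b2-p2)-(hb2-p2)*(b1-p1)" "(k1-p1)*(c2-p2)-(k2-p2)*(c1-p1) = (hc1-p1)*(c2-p2)-(hc2-p2)*(c1-p1)"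
  shows "(k1-p1)*(a2-p2)-(k2-p2)*(a1-p1) = (ha1-p1)*(a2-p2)-(ha2-p2)*(a1-p1)"
proof -
  have e1: "((ha1-p1)*(a2-p2)-(ha2-p2)*(a1-p1))*((b1-p1)*(c2-p2)-(b2-p2)*(c1-p1)) = ((b1-p1)*(c1-p1)+(b2-p2)*(c2-p2))*(((c1-p1)*(a1-p1)+(c2-p2)*(a2-p2)) - ((a1-p1)*(b1-p1)+(a2-p2)*(b2-p2)))"
    using assms(1,2) by algebra
  have e2: "((hb1-p1)*(b2-p2)-(hb2-p2)*(b1-p1))*((c1-p1)*(a2-p2)-(c2-p2)*(a1-p1)) = ((c1-p1)*(a1-p1)+(c2-p2)*(a2-p2))*(((a1-p1)*(b1-p1)+(a2-p2)*(b2-p2)) - ((b1-p1)*(c1-p1)+(b2-p2)*(c2-p2)))"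
    using assms(3,4) by algebra
  have e3: "((hc1-p1)*(c2-p2)-(hc2-p2)*(c1-p1))*((a1-p1)*(b2-p2)-(a2-p2)*(b1-p1)) = ((a1-p1)*(b1-p1)+(a2-p2)*(b2-p2))*(((b1-p1)*(c1-p1)+(b2-p2)*(c2-p2)) - ((c1-p1)*(a1-p1)+(c2-p2)*(a2-p2)))"
    using assms(5,6) by algebra
  have pl: "((k1-p1)*(a2-p2)-(k2-p2)*(a1-p1))*((b1-p1)*(c2-p2)-(b2-p2)*(c1-p1)) + ((k1-p1)*(b2-p2)-(k2-p2)*(b1-p1))*((c1-p1)*(a2-p2)-(c2-p2)*(a1-p1)) + ((k1-p1)*(c2-p2)-(k2-p2)*(c1-p1))*((a1-p1)*(b2-p2)-(a2-p2)*(b1-p1)) = 0"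
    by algebra
  have "((k1-p1)*(a2-p2)-(k2-p2)*(a1-p1))*((b1-p1)*(c2-p2)-(b2-p2)*(c1-p1)) = ((ha1-p1)*(a2-p2)-(ha2-p2)*(a1-p1))*((b1-p1)*(c2-p2)-(b2-p2)*(c1-p1))"
    using e1 e2 e3 pl assms(8,9) by algebra
  then show ?thesis using assms(7) by simp
qed

lemma CORE:
  fixes a1 a2 b1 b2 c1 c2 p1 p2 ha1 ha2 hb1 hb2 hc1 hc2 ca cb cd ce cf :: real
  assumes
    oa1: "(ha1 - b1)*(p1-c1) + (ha2-b2)*(p2-c2) = 0" and
    oa2: "(ha1 - p1)*(c1-b1) + (ha2-p2)*(c2-b2) = 0" and
    oa3: "(ha1 - c1)*(b1-p1) + (ha2-c2)*(b2-p2) = 0" and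
    ob1: "(hb1 - c1)*(p1-a1) + (hb2-c2)*(p2-a2) = 0" and
    ob2: "(hb1 - p1)*(a1-c1) + (hb2-p2)*(a2-c2) = 0" and
    ob3: "(hb1 - a1)*(c1-p1) + (hb2-a2)*(c2-p2) = 0" and
    oc1: "(hc1 - p1)*(a1-b1) + (hc2-p2)*(a2-b2) = 0" and
    oc2: "(hc1 - a1)*(b1-p1) + (hc2-a2)*(b2-p2) = 0" and
    oc3: "(hc1 - b1)*(p1-a1) + (hc2-b2)*(p2-a2) = 0" and
    tBPC: "(p1-b1)*(c2-b2) - (p2-b2)*(c1-b1) \<noteq> 0" and
    tCPA: "(p1-c1)*(a2-c2) - (p2-c2)*(a1-c1) \<noteq> 0" and
    tPAB: "(a1-p1)*(b2-p2) - (a2-p2)*(b1-p1) \<noteq> 0" and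
    tA: "(hb1-a1)*(hc2-a2) - (hb2-a2)*(hc1-a1) \<noteq> 0" and
    tB: "(hc1-b1)*(ha2-b2) - (hc2-b2)*(ha1-b1) \<noteq> 0" and
    tC: "(ha1-c1)*(hb2-c2) - (ha2-c2)*(hb1-c1) \<noteq> 0" and
    fA: "ca*a1^2 + cb*a1*a2 - ca*a2^2 + cd*a1 + ce*a2 + cf = 0" and
    fB: "ca*b1^2 + cb*b1*b2 - ca*b2^2 + cd*b1 + ce*b2 + cf = 0" and
    fC: "ca*c1^2 + cb*c1*c2 - ca*c2^2 + cd*c1 + ce*c2 + cf = 0" and
    fP: "ca*p1^2 + cb*p1*p2 - ca*p2^2 + cd*p1 + ce*p2 + cf = 0" and
    nz: "4*ca^2+cb^2 \<noteq> 0"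
  shows "\<exists>q1 q2. oncirc q1 q2 a1 a2 hb1 hb2 hc1 hc2 \<and> oncirc q1 q2 b1 b2 hc1 hc2 ha1 ha2 \<and>
     oncirc q1 q2 c1 c2 ha1 ha2 hb1 hb2 \<and> ca*q1^2 + cb*q1*q2 - ca*q2^2 + cd*q1 + ce*q2 + cf = 0"
proof -
  have fHA: "ca*ha1^2 + cb*ha1*ha2 - ca*ha2^2 + cd*ha1 + ce*ha2 + cf = 0"
    by (rule L1[OF oa1 oa2 tBPC fB fP fC])
  have fHB: "ca*hb1^2 + cb*hb1*hb2 - ca*hb2^2 + cd*hb1 + ce*hb2 + cf = 0"
    by (rule L1[OF ob1 ob2 tCPA fC fP fA])
  have fHC: "ca*hc1^2 + cb*hc1*hc2 - ca*hc2^2 + cd*hc1 + ce*hc2 + cf = 0"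
    by (rule L1[OF oc1 oc2 tPAB fP fA fB])
  obtain k1 k2 where k1: "(k1 - a1)*(hb1-hc1) + (k2-a2)*(hb2-hc2) = 0"
      and k2: "(k1 - hb1)*(hc1-a1) + (k2-hb2)*(hc2-a2) = 0"
    using orthocenter_ex[OF tA] by blast
  have k3: "(k1 - hc1)*(a1-hb1) + (k2-hc2)*(a2-hb2) = 0" using k1 k2 by algebra
  have par1: "(k1-p1)*(b2-p2)-(k2-p2)*(b1-p1) = (hb1-p1)*(b2-p2)-(hb2-p2)*(b1-p1)"
  proof -
    have "(k1-hb1)*(b2-p2)-(k2-hb2)*(b1-p1) = 0"
      by (rule Lpar[OF k2 _ tA]) (use oc2 in algebra)
    then show ?thesis by algebra
  qed
  have par2: "(k1-p1)*(c2-p2)-(k2-p2)*(c1-p1) = (hc1-p1)*(c2-p2)-(hc2-p2)*(c1-p1)"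
  proof -
    have nz2: "(hc1-a1)*(a2-hb2)-(hc2-a2)*(a1-hb1) \<noteq> 0" using tA by algebra
    have "(k1-hc1)*(c2-p2)-(k2-hc2)*(c1-p1) = 0"
      by (rule Lpar[OF k3 _ nz2]) (use ob3 in algebra)
    then show ?thesis by algebra
  qed
  have par3: "(k1-p1)*(a2-p2)-(k2-p2)*(a1-p1) = (ha1-p1)*(a2-p2)-(ha2-p2)*(a1-p1)"
  proof (rule conc)
    show "(ha1-p1)*(b1-p1)+(ha2-p2)*(b2-p2) = (b1-p1)*(c1-p1)+(b2-p2)*(c2-p2)" using oa1 oa2 by algebra
    show "(ha1-p1)*(c1-p1)+(ha2-p2)*(c2-p2) = (b1-p1)*(c1-p1)+(b2-p2)*(c2-p2)" using oa1 oa2 by algebra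
    show "(hb1-p1)*(c1-p1)+(hb2-p2)*(c2-p2) = (c1-p1)*(a1-p1)+(c2-p2)*(a2-p2)" using ob1 ob2 by algebra
    show "(hb1-p1)*(a1-p1)+(hb2-p2)*(a2-p2) = (c1-p1)*(a1-p1)+(c2-p2)*(a2-p2)" using ob1 ob2 by algebra
    show "(hc1-p1)*(a1-p1)+(hc2-p2)*(a2-p2) = (a1-p1)*(b1-p1)+(a2-p2)*(b2-p2)" using oc1 oc2 by algebra
    show "(hc1-p1)*(b1-p1)+(hc2-p2)*(b2-p2) = (a1-p1)*(b1-p1)+(a2-p2)*(b2-p2)" using oc1 oc2 by algebra
    show "(b1-p1)*(c2-p2)-(b2-p2)*(c1-p1) \<noteq> 0" using tBPC by algebra
  qed (fact par1, fact par2)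
  (* K is orthocenter of B HC HA *)
  have kB2: "(k1 - hc1)*(ha1-b1) + (k2-hc2)*(ha2-b2) = 0"
  proof -
    have "(k1-hc1)*(c2-p2)-(k2-hc2)*(c1-p1) = 0" using par2 by algebra
    moreover have "(c1-p1)*(ha1-b1)+(c2-p2)*(ha2-b2) = 0" using oa1 by algebra
    moreover have "(b1-p1)*(c2-p2)-(b2-p2)*(c1-p1) \<noteq> 0" using tBPC by algebra
    ultimately show ?thesis by (rule Lperp)
  qed
  have kB3: "(k1 - ha1)*(b1-hc1) + (k2-ha2)*(b2-hc2) = 0"
  proof -
    have "(k1-ha1)*(a2-p2)-(k2-ha2)*(a1-p1) = 0" using par3 by algebra
    moreover have "(a1-p1)*(b1-hc1)+(a2-p2)*(b2-hc2) = 0" using oc3 by algebra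
    moreover have "(b1-p1)*(a2-p2)-(b2-p2)*(a1-p1) \<noteq> 0" using tPAB by algebra
    ultimately show ?thesis by (rule Lperp)
  qed
  have kB1: "(k1 - b1)*(hc1-ha1) + (k2-b2)*(hc2-ha2) = 0" using kB2 kB3 by algebra
  have kC2: "(k1 - ha1)*(hb1-c1) + (k2-ha2)*(hb2-c2) = 0"
  proof -
    have "(k1-ha1)*(a2-p2)-(k2-ha2)*(a1-p1) = 0" using par3 by algebra
    moreover have "(a1-p1)*(hb1-c1)+(a2-p2)*(hb2-c2) = 0" using ob1 by algebra
    moreover have "(b1-p1)*(a2-p2)-(b2-p2)*(a1-p1) \<noteq> 0" using tPAB by algebra
    ultimately show ?thesis by (rule Lperp)
  qed
  have kC3: "(k1 - hb1)*(c1-ha1) + (k2-hb2)*(c2-ha2) = 0"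
  proof -
    have "(k1-hb1)*(b2-p2)-(k2-hb2)*(b1-p1) = 0" using par1 by algebra
    moreover have "(b1-p1)*(c1-ha1)+(b2-p2)*(c2-ha2) = 0" using oa3 by algebra
    moreover have "(c1-p1)*(b2-p2)-(c2-p2)*(b1-p1) \<noteq> 0" using tBPC by algebra
    ultimately show ?thesis by (rule Lperp)
  qed
  have kC1: "(k1 - c1)*(ha1-hb1) + (k2-c2)*(ha2-hb2) = 0" using kC2 kC3 by algebra
  obtain z1 z2 where z1: "2*ca*z1 + cb*z2 + cd = 0" and z2: "cb*z1 - 2*ca*z2 + ce = 0"
    using center_ex[OF nz] by blast
  have fK: "ca*k1^2 + cb*k1*k2 - ca*k2^2 + cd*k1 + ce*k2 + cf = 0"
    by (rule L1[OF k1 k2 tA fA fHB fHC])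
  have fQ: "ca*(2*z1-k1)^2 + cb*(2*z1-k1)*(2*z2-k2) - ca*(2*z2-k2)^2 + cd*(2*z1-k1) + ce*(2*z2-k2) + cf = 0"
    by (rule Lsym[OF z1 z2 fK])
  have cA: "oncirc (2*z1-k1) (2*z2-k2) a1 a2 hb1 hb2 hc1 hc2"
  proof -
    obtain m1 m2 where m: "(m1-a1)^2+(m2-a2)^2 = (m1-hb1)^2+(m2-hb2)^2" "(m1-a1)^2+(m2-a2)^2 = (m1-hc1)^2+(m2-hc2)^2"
      using circumcenter_ex[OF tA] by blast
    have "(m1-(2*z1-k1))^2+(m2-(2*z2-k2))^2 = (m1-a1)^2+(m2-a2)^2"
      by (rule L2[OF k1 k2 tA fA fHB fHC z1 z2 nz m])
    then show ?thesis unfolding oncirc_def using m by blast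
  qed
  have cB: "oncirc (2*z1-k1) (2*z2-k2) b1 b2 hc1 hc2 ha1 ha2"
  proof -
    obtain m1 m2 where m: "(m1-b1)^2+(m2-b2)^2 = (m1-hc1)^2+(m2-hc2)^2" "(m1-b1)^2+(m2-b2)^2 = (m1-ha1)^2+(m2-ha2)^2"
      using circumcenter_ex[OF tB] by blast
    have "(m1-(2*z1-k1))^2+(m2-(2*z2-k2))^2 = (m1-b1)^2+(m2-b2)^2"
      by (rule L2[OF kB1 kB2 tB fB fHC fHA z1 z2 nz m])
    then show ?thesis unfolding oncirc_def using m by blast
  qed
  have cC: "oncirc (2*z1-k1) (2*z2-k2) c1 c2 ha1 ha2 hb1 hb2"
  proof -
    obtain m1 m2 where m: "(m1-c1)^2+(m2-c2)^2 = (m1-ha1)^2+(m2-ha2)^2" "(m1-c1)^2+(m2-c2)^2 = (m1-hb1)^2+(m2-hb2)^2"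
      using circumcenter_ex[OF tC] by blast
    have "(m1-(2*z1-k1))^2+(m2-(2*z2-k2))^2 = (m1-c1)^2+(m2-c2)^2"
      by (rule L2[OF kC1 kC2 tC fC fHA fHB z1 z2 nz m])
    then show ?thesis unfolding oncirc_def using m by blast
  qed
  show ?thesis using cA cB cC fQ by blast
qed

lemma part1_conic:
  fixes a1 a2 b1 b2 c1 c2 p1 p2 :: real
  assumes "(b1-a1)*(c2-a2) - (b2-a2)*(c1-a1) \<noteq> 0"
  shows "\<exists>ca cb cd ce cf. 4*ca^2+cb^2 \<noteq> 0 \<and>
    ca*a1^2 + cb*a1*a2 - ca*a2^2 + cd*a1 + ce*a2 + cf = 0 \<and>
    ca*b1^2 + cb*b1*b2 - ca*b2^2 + cd*b1 + ce*b2 + cf = 0 \<and>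
    ca*c1^2 + cb*c1*c2 - ca*c2^2 + cd*c1 + ce*c2 + cf = 0 \<and>
    ca*p1^2 + cb*p1*p2 - ca*p2^2 + cd*p1 + ce*p2 + cf = 0"
proof -
  obtain d1 e1 f1 where h1: "1*a1^2 + 0*a1*a2 - 1*a2^2 + d1*a1 + e1*a2 + f1 = 0"
    "1*b1^2 + 0*b1*b2 - 1*b2^2 + d1*b1 + e1*b2 + f1 = 0"
    "1*c1^2 + 0*c1*c2 - 1*c2^2 + d1*c1 + e1*c2 + f1 = 0"
    using conic3_ex[OF assms, of 1 0] by blast
  obtain d2 e2 f2 where h2: "0*a1^2 + 1*a1*a2 - 0*a2^2 + d2*a1 + e2*a2 + f2 = 0"
    "0*b1^2 + 1*b1*b2 - 0*b2^2 + d2*b1 + e2*b2 + f2 = 0"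
    "0*c1^2 + 1*c1*c2 - 0*c2^2 + d2*c1 + e2*c2 + f2 = 0"
    using conic3_ex[OF assms, of 0 1] by blast
  define g1 where "g1 = 1*p1^2 + 0*p1*p2 - 1*p2^2 + d1*p1 + e1*p2 + f1"
  define g2 where "g2 = 0*p1^2 + 1*p1*p2 - 0*p2^2 + d2*p1 + e2*p2 + f2"
  show ?thesis
  proof (cases "g1 = 0 \<and> g2 = 0")
    case True
    show ?thesis
      by (rule exI[of _ 1], rule exI[of _ 0], rule exI[of _ d1], rule exI[of _ e1], rule exI[of _ f1])
        (use h1 True g1_def in simp)
  next
    case False
    have nz: "4*g2^2+(-g1)^2 \<noteq> 0" using False by (auto simp add: add_nonneg_eq_0_iff)
    show ?thesis
      apply (rule exI[of _ g2], rule exI[of _ "-g1"], rule exI[of _ "g2*d1-g1*d2"],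
             rule exI[of _ "g2*e1-g1*e2"], rule exI[of _ "g2*f1-g1*f2"])
      using nz h1 h2 unfolding g1_def g2_def by algebra
  qed
qed

theorem corollary2p3:
  fixes A B C P HA HB HC :: point
  assumes "triangle A B C"
    and "triangle B P C" and "triangle C P A" and "triangle P A B"
    and "is_orthocenter HA B P C" and "is_orthocenter HB C P A" and "is_orthocenter HC P A B"
    and "triangle A HB HC" and "triangle B HC HA" and "triangle C HA HB"
  shows "(\<exists>Q. on_circumcircle Q A HB HC \<and> on_circumcircle Q B HC HA \<and> on_circumcircle Q C HA HB)
    \<and> (\<forall>a b c d e f. rect_hyperbola a b c d e f \<and> on_conic a b c d e f A \<and> on_conic a b c d e f B
          \<and> on_conic a b c d e f C \<and> on_conic a b c d e f P \<longrightarrow>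
        (\<exists>Q. on_circumcircle Q A HB HC \<and> on_circumcircle Q B HC HA \<and> on_circumcircle Q C HA HB
             \<and> on_conic a b c d e f Q))"
proof -
  obtain a1 a2 where A: "A = (a1,a2)" by (cases A)
  obtain b1 b2 where B: "B = (b1,b2)" by (cases B)
  obtain c1 c2 where C: "C = (c1,c2)" by (cases C)
  obtain p1 p2 where P: "P = (p1,p2)" by (cases P)
  obtain ha1 ha2 where HA: "HA = (ha1,ha2)" by (cases HA)
  obtain hb1 hb2 where HB: "HB = (hb1,hb2)" by (cases HB)
  obtain hc1 hc2 where HC: "HC = (hc1,hc2)" by (cases HC)
  have tABC: "(b1-a1)*(c2-a2) - (b2-a2)*(c1-a1) \<noteq> 0" using tri_cross assms(1) A B C by blast
  have tBPC: "(p1-b1)*(c2-b2) - (p2-b2)*(c1-b1) \<noteq> 0" using tri_cross assms(2) P B C by blast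
  have tCPA: "(p1-c1)*(a2-c2) - (p2-c2)*(a1-c1) \<noteq> 0" using tri_cross assms(3) A P C by blast
  have tPAB: "(a1-p1)*(b2-p2) - (a2-p2)*(b1-p1) \<noteq> 0" using tri_cross assms(4) A P B by blast
  have tA: "(hb1-a1)*(hc2-a2) - (hb2-a2)*(hc1-a1) \<noteq> 0" using tri_cross assms(8) A HB HC by blast
  have tB: "(hc1-b1)*(ha2-b2) - (hc2-b2)*(ha1-b1) \<noteq> 0" using tri_cross assms(9) B HC HA by blast
  have tC: "(ha1-c1)*(hb2-c2) - (ha2-c2)*(hb1-c1) \<noteq> 0" using tri_cross assms(10) C HA HB by blast
  have oa: "(ha1 - b1)*(p1-c1) + (ha2-b2)*(p2-c2) = 0"
    "(ha1 - p1)*(c1-b1) + (ha2-p2)*(c2-b2) = 0"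
    "(ha1 - c1)*(b1-p1) + (ha2-c2)*(b2-p2) = 0"
    using assms(5) unfolding HA B P C is_orthocenter_def by simp_all
  have ob: "(hb1 - c1)*(p1-a1) + (hb2-c2)*(p2-a2) = 0"
    "(hb1 - p1)*(a1-c1) + (hb2-p2)*(a2-c2) = 0"
    "(hb1 - a1)*(c1-p1) + (hb2-a2)*(c2-p2) = 0"
    using assms(6) unfolding HB A P C is_orthocenter_def by simp_all
  have oc: "(hc1 - p1)*(a1-b1) + (hc2-p2)*(a2-b2) = 0"
    "(hc1 - a1)*(b1-p1) + (hc2-a2)*(b2-p2) = 0"
    "(hc1 - b1)*(p1-a1) + (hc2-b2)*(p2-a2) = 0"
    using assms(7) unfolding HC A P B is_orthocenter_def by simp_all
  note core = CORE[OF oa ob oc tBPC tCPA tPAB tA tB tC]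
  have brid: "on_circumcircle (q1,q2) A HB HC \<and> on_circumcircle (q1,q2) B HC HA \<and> on_circumcircle (q1,q2) C HA HB"
    if "oncirc q1 q2 a1 a2 hb1 hb2 hc1 hc2 \<and> oncirc q1 q2 b1 b2 hc1 hc2 ha1 ha2 \<and>
     oncirc q1 q2 c1 c2 ha1 ha2 hb1 hb2" for q1 q2
    using that oncirc_bridge unfolding A B C HA HB HC by blast
  have part1: "\<exists>Q. on_circumcircle Q A HB HC \<and> on_circumcircle Q B HC HA \<and> on_circumcircle Q C HA HB"
  proof -
    obtain ca cb cd ce cf where cc: "4*ca^2+cb^2 \<noteq> 0"
      "ca*a1^2 + cb*a1*a2 - ca*a2^2 + cd*a1 + ce*a2 + cf = 0"
      "ca*b1^2 + cb*b1*b2 - ca*b2^2 + cd*b1 + ce*b2 + cf = 0"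
      "ca*c1^2 + cb*c1*c2 - ca*c2^2 + cd*c1 + ce*c2 + cf = 0"
      "ca*p1^2 + cb*p1*p2 - ca*p2^2 + cd*p1 + ce*p2 + cf = 0"
      using part1_conic[OF tABC] by blast
    obtain q1 q2 where "oncirc q1 q2 a1 a2 hb1 hb2 hc1 hc2 \<and> oncirc q1 q2 b1 b2 hc1 hc2 ha1 ha2 \<and>
     oncirc q1 q2 c1 c2 ha1 ha2 hb1 hb2"
      using core[OF cc(2,3,4,5,1)] by blast
    then show ?thesis using brid by blast
  qed
  have part2: "\<exists>Q. on_circumcircle Q A HB HC \<and> on_circumcircle Q B HC HA \<and> on_circumcircle Q C HA HB
             \<and> on_conic a b c d e f Q"
    if h: "rect_hyperbola a b c d e f \<and> on_conic a b c d e f A \<and> on_conic a b c d e f B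
          \<and> on_conic a b c d e f C \<and> on_conic a b c d e f P" for a b c d e f
  proof -
    have cm: "c = -a" and abc: "(a,b,c) \<noteq> (0,0,0)" using h unfolding rect_hyperbola_def by auto
    have nz: "4*a^2+b^2 \<noteq> 0"
    proof
      assume "4*a^2+b^2 = 0"
      then have "a^2 = 0" "b^2 = 0" by (smt (verit) zero_le_power2)+
      then have "a = 0" "b = 0" by simp_all
      with abc cm show False by simp
    qed
    have cv: "on_conic a b c d e f (x,y) \<longleftrightarrow> a*x^2 + b*x*y - a*y^2 + d*x + e*y + f = 0" for x y
      unfolding on_conic_def cm by (simp add: algebra_simps)
    have fA: "a*a1^2 + b*a1*a2 - a*a2^2 + d*a1 + e*a2 + f = 0" using h cv A by blast
    have fB: "a*b1^2 + b*b1*b2 - a*b2^2 + d*b1 + e*b2 + f = 0" using h cv B by blast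
    have fC: "a*c1^2 + b*c1*c2 - a*c2^2 + d*c1 + e*c2 + f = 0" using h cv C by blast
    have fP: "a*p1^2 + b*p1*p2 - a*p2^2 + d*p1 + e*p2 + f = 0" using h cv P by blast
    obtain q1 q2 where q: "oncirc q1 q2 a1 a2 hb1 hb2 hc1 hc2 \<and> oncirc q1 q2 b1 b2 hc1 hc2 ha1 ha2 \<and>
     oncirc q1 q2 c1 c2 ha1 ha2 hb1 hb2" "a*q1^2 + b*q1*q2 - a*q2^2 + d*q1 + e*q2 + f = 0"
      using core[OF fA fB fC fP nz] by blast
    show ?thesis
      by (rule exI[of _ "(q1,q2)"]) (use brid[OF q(1)] q(2) cv in blast)
  qed
  show ?thesis using part1 part2 by blast
qed

end
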